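(* For all positive integers $\Delta$ and positive reals $\beta$ and $\mu_S$ there is $\mu_T>0$ such that the following holds. Let $S$ and $T$ be disjoint sets, $\mathcal{S}\subseteq\binom{S}{\Delta}$ a family of pairwise disjoint $\Delta$-sets in $S$ with $|\mathcal{S}|\le\frac1\Delta(1-\mu_S)|T|$, and $\mathcal{T}\subseteq\binom{T}{\Delta}$ a family of $\Delta$-sets in $T$ with $|\mathcal{T}|\le\mu_T|T|^\Delta$. Then a uniformly random injective function $f:S\to T$ satisfies $|f(\mathcal{S})\setminus\mathcal{T}|>(1-\beta)|\mathcal{S}|$ with probability at least $1-\beta^{|\mathcal{S}|}$.
   Context: $f(\mathcal{S})$ denotes the family $\{f(A):A\in\mathcal{S}\}$ of images of the sets in $\mathcal{S}$; $\binom{S}{\Delta}$ is the family of $\Delta$-element subsets of $S$. *)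

theory Defs
  imports "HOL-Probability.Probability"
begin

text \<open>The injective functions from S to T, as extensional functions
  (undefined outside S), so that there are finitely many of them.\<close>
definition inj_funs :: "'a set \<Rightarrow> 'b set \<Rightarrow> ('a \<Rightarrow> 'b) set" where
  "inj_funs S T = {f \<in> S \<rightarrow>\<^sub>E T. inj_on f S}"

end

theory Submission
  imports Defs
begin

lemma inj_restrict_pair: "inj_on (\<lambda>f. (restrict f X, restrict f Y)) (X \<union> Y \<rightarrow>\<^sub>E B)"
proof (rule inj_onI)
  fix f g assume f: "f \<in> X \<union> Y \<rightarrow>\<^sub>E B" and g: "g \<in> X \<union> Y \<rightarrow>\<^sub>E B"
    and eq: "(restrict f X, restrict f Y) = (restrict g X, restrict g Y)"
  have e1: "restrict f X = restrict g X" and e2: "restrict f Y = restrict g Y" using eq by simp_all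
  show "f = g"
  proof
    fix x
    show "f x = g x"
    proof (cases "x \<in> X \<union> Y")
      case True
      show ?thesis
      proof (cases "x \<in> X")
        case True then show ?thesis using fun_cong[OF e1, of x] by simp
      next
        case False then have "x \<in> Y" using \<open>x \<in> X \<union> Y\<close> by simp
        then show ?thesis using fun_cong[OF e2, of x] by simp
      qed
    next
      case False then show ?thesis using PiE_arb[OF f False] PiE_arb[OF g False] by simp
    qed
  qed
qed

definition ff :: "nat \<Rightarrow> nat \<Rightarrow> nat" where "ff n u = prod ((-) n) {0..<u}"

lemma card_inj_funs: "finite S \<Longrightarrow> finite T \<Longrightarrow> card (inj_funs S T) = ff (card T) (card S)"
  using card_inj_on_subset_funcset[of S T S] by (simp add: inj_funs_def ff_def)

lemma finite_inj_funs: "finite S \<Longrightarrow> finite T \<Longrightarrow> finite (inj_funs S T)"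
  unfolding inj_funs_def by (rule finite_subset[OF _ finite_PiE[of S "\<lambda>_. T"]]) auto

lemma count_restrict:
  assumes fS: "finite S" and fT: "finite T" and US: "U \<subseteq> S"
  shows "card {f \<in> inj_funs S T. P (restrict f U)}
     \<le> card {g \<in> inj_funs U T. P g} * ff (card T - card U) (card S - card U)"
proof -
  let ?A = "{f \<in> inj_funs S T. P (restrict f U)}"
  let ?G = "{g \<in> inj_funs U T. P g}"
  let ?Sig = "Sigma ?G (\<lambda>g. inj_funs (S - U) (T - g ` U))"
  let ?h = "\<lambda>f. (restrict f U, restrict f (S - U))"
  have SU: "U \<union> (S - U) = S" using US by auto
  have inj: "inj_on ?h ?A"
    by (rule inj_on_subset[OF inj_restrict_pair[of U "S - U" T]]) (use US in \<open>auto simp: inj_funs_def SU\<close>)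
  have sub: "?h ` ?A \<subseteq> ?Sig"
  proof
    fix z assume "z \<in> ?h ` ?A"
    then obtain f where f: "f \<in> S \<rightarrow>\<^sub>E T" "inj_on f S" "P (restrict f U)" and z: "z = ?h f"
      by (auto simp: inj_funs_def)
    have 1: "restrict f U \<in> inj_funs U T"
      using f US unfolding inj_funs_def by (auto simp: inj_on_def)
    have 2: "restrict f (S - U) \<in> inj_funs (S - U) (T - restrict f U ` U)"
      unfolding inj_funs_def image_restrict_eq
    proof (intro CollectI conjI)
      show "restrict f (S - U) \<in> S - U \<rightarrow>\<^sub>E T - f ` U"
      proof (rule PiE_I)
        fix x assume x: "x \<in> S - U"
        have "f x \<in> T" using f(1) x by auto
        moreover have "f x \<notin> f ` U"
        proof
          assume "f x \<in> f ` U"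
          then obtain y where "y \<in> U" "f x = f y" by auto
          then show False using f(2) x US by (metis DiffD1 DiffD2 inj_onD subsetD)
        qed
        ultimately show "restrict f (S - U) x \<in> T - f ` U" using x by simp
      qed auto
      show "inj_on (restrict f (S - U)) (S - U)"
        using f(2) by (auto simp: inj_on_def)
    qed
    show "z \<in> ?Sig" using 1 2 f(3) z by auto
  qed
  have finG: "finite ?G" using finite_inj_funs[OF finite_subset[OF US fS] fT] by simp
  have cardfib: "card (inj_funs (S - U) (T - g ` U)) = ff (card T - card U) (card S - card U)"
    if g: "g \<in> ?G" for g
  proof -
    have gi: "inj_on g U" "g ` U \<subseteq> T" using g by (auto simp: inj_funs_def)
    have "card (T - g ` U) = card T - card U"
      using gi fT by (simp add: card_Diff_subset card_image finite_subset)
    moreover have "card (S - U) = card S - card U" using US fS by (simp add: card_Diff_subset finite_subset)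
    ultimately show ?thesis using card_inj_funs[of "S - U" "T - g ` U"] fS fT by simp
  qed
  have "card ?A = card (?h ` ?A)" using inj by (simp add: card_image)
  also have "\<dots> \<le> card ?Sig"
    by (rule card_mono[OF _ sub]) (use finG fS fT in \<open>auto intro!: finite_inj_funs\<close>)
  also have "card ?Sig = (\<Sum>g\<in>?G. card (inj_funs (S - U) (T - g ` U)))"
    by (rule card_SigmaI) (use finG fS fT in \<open>auto intro!: finite_inj_funs\<close>)
  also have "\<dots> = card ?G * ff (card T - card U) (card S - card U)"
    using cardfib by simp
  finally show ?thesis .
qed


lemma count_H:
  assumes fA: "finite A" and cA: "card A = D" and fT: "finite T"
    and TT: "TT \<subseteq> {B. B \<subseteq> T \<and> card B = D}"
  shows "card {h \<in> A \<rightarrow>\<^sub>E T. h ` A \<in> TT} \<le> card TT * D ^ D"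
proof -
  have fTT: "finite TT" by (rule finite_subset[OF _ finite_Collect_subsets[OF fT]]) (use TT in auto)
  have "{h \<in> A \<rightarrow>\<^sub>E T. h ` A \<in> TT} \<subseteq> (\<Union>B\<in>TT. A \<rightarrow>\<^sub>E B)"
  proof
    fix h assume "h \<in> {h \<in> A \<rightarrow>\<^sub>E T. h ` A \<in> TT}"
    then have h: "h \<in> A \<rightarrow>\<^sub>E T" "h ` A \<in> TT" by auto
    have "h \<in> A \<rightarrow>\<^sub>E h ` A" using h(1) by (auto simp: PiE_def)
    then show "h \<in> (\<Union>B\<in>TT. A \<rightarrow>\<^sub>E B)" using h(2) by blast
  qed
  then have "card {h \<in> A \<rightarrow>\<^sub>E T. h ` A \<in> TT} \<le> card (\<Union>B\<in>TT. A \<rightarrow>\<^sub>E B)"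
    by (rule card_mono[rotated]) (use fTT fA TT fT in \<open>auto intro!: finite_PiE intro: finite_subset\<close>)
  also have "\<dots> \<le> (\<Sum>B\<in>TT. card (A \<rightarrow>\<^sub>E B))" by (rule card_UN_le[OF fTT])
  also have "\<dots> = (\<Sum>B\<in>TT. D ^ D)"
    by (rule sum.cong) (use TT fA cA in \<open>auto simp: card_funcsetE\<close>)
  also have "\<dots> = card TT * D ^ D" by simp
  finally show ?thesis .
qed

lemma count_G:
  assumes "finite I" "\<forall>A\<in>I. finite A \<and> card A = D"
    "\<forall>A\<in>I. \<forall>B\<in>I. A \<noteq> B \<longrightarrow> A \<inter> B = {}" and fT: "finite T"
    and TT: "TT \<subseteq> {B. B \<subseteq> T \<and> card B = D}"
  shows "card {g \<in> \<Union>I \<rightarrow>\<^sub>E T. \<forall>A\<in>I. g ` A \<in> TT} \<le> (card TT * D ^ D) ^ card I"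
  using assms(1,2,3)
proof (induction I rule: finite_induct)
  case empty
  then show ?case by (simp add: card_le_Suc0_iff_eq)
next
  case (insert A I)
  let ?H = "{h \<in> A \<rightarrow>\<^sub>E T. h ` A \<in> TT}"
  let ?G = "{g \<in> \<Union>I \<rightarrow>\<^sub>E T. \<forall>A\<in>I. g ` A \<in> TT}"
  let ?G' = "{g \<in> \<Union>(insert A I) \<rightarrow>\<^sub>E T. \<forall>A\<in>insert A I. g ` A \<in> TT}"
  have fA: "finite A" "card A = D" using insert by auto
  have fU: "finite (\<Union>I)" using insert by auto
  have IH: "card ?G \<le> (card TT * D ^ D) ^ card I" using insert by auto
  have H: "card ?H \<le> card TT * D ^ D" by (rule count_H[OF fA fT TT])
  let ?h = "\<lambda>f. (restrict f A, restrict f (\<Union>I))"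
  have inj: "inj_on ?h ?G'"
    by (rule inj_on_subset[OF inj_restrict_pair[of A "\<Union>I" T]]) auto
  have sub: "?h ` ?G' \<subseteq> ?H \<times> ?G"
  proof
    fix z assume "z \<in> ?h ` ?G'"
    then obtain g where g: "g \<in> \<Union>(insert A I) \<rightarrow>\<^sub>E T" "\<forall>A\<in>insert A I. g ` A \<in> TT" and z: "z = ?h g"
      by blast
    have 1: "restrict g A \<in> ?H" using g by (auto simp: image_restrict_eq)
    have "restrict g (\<Union>I) ` B = g ` B" if "B \<in> I" for B
      using that by (auto simp: restrict_def)
    then have 2: "restrict g (\<Union>I) \<in> ?G" using g by auto
    show "z \<in> ?H \<times> ?G" using 1 2 z by auto
  qed
  have fH: "finite ?H" by (rule finite_subset[OF _ finite_PiE[of A "\<lambda>_. T"]]) (use fA fT in auto)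
  have fG: "finite ?G" by (rule finite_subset[OF _ finite_PiE[of "\<Union>I" "\<lambda>_. T"]]) (use fU fT in auto)
  have "card ?G' = card (?h ` ?G')" using inj by (simp add: card_image)
  also have "\<dots> \<le> card (?H \<times> ?G)" by (rule card_mono[OF _ sub]) (use fH fG in auto)
  also have "\<dots> = card ?H * card ?G" by (simp add: card_cartesian_product)
  also have "\<dots> \<le> (card TT * D ^ D) * (card TT * D ^ D) ^ card I" using H IH by (rule mult_mono) auto
  also have "\<dots> = (card TT * D ^ D) ^ card (insert A I)" using insert by simp
  finally show ?case .
qed


lemma ff_Suc: "ff n (Suc d) = ff n d * (n - d)"
  by (simp add: ff_def)

lemma ff_split: "ff n (u + d) = ff n u * ff (n - u) d"
proof (induction d)
  case 0 then show ?case by (simp add: ff_def)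
next
  case (Suc d)
  have "ff n (u + Suc d) = ff n (u + d) * (n - (u + d))" using ff_Suc[of n "u+d"] by simp
  also have "\<dots> = ff n u * (ff (n - u) d * (n - u - d))"
    by (simp only: Suc.IH diff_diff_left mult.assoc)
  also have "\<dots> = ff n u * ff (n - u) (Suc d)" by (simp only: ff_Suc)
  finally show ?case .
qed

lemma ff_lower: "(n - u) ^ u \<le> ff n u"
proof -
  have "(\<Prod>i\<in>{0..<u}. n - u) \<le> (\<Prod>i\<in>{0..<u}. n - i)"
    by (rule prod_mono) auto
  then show ?thesis by (simp add: ff_def)
qed

lemma ff_pos: "u \<le> n \<Longrightarrow> 0 < ff n u"
  unfolding ff_def by (rule prod_pos) auto

lemma event_bound:
  fixes D :: nat and \<mu>S p :: real and S T :: "'a set" and SS TT I :: "'a set set"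
  assumes D: "D > 0" and mS: "\<mu>S > 0" and p0: "0 < p"
  and fS: "finite S" and fT: "finite T" and ST: "card S \<le> card T"
  and SSsub: "SS \<subseteq> {A. A \<subseteq> S \<and> card A = D}"
  and disj: "\<forall>A\<in>SS. \<forall>B\<in>SS. A \<noteq> B \<longrightarrow> A \<inter> B = {}"
  and Dk: "real D * real (card SS) \<le> (1 - \<mu>S) * real (card T)"
  and TT: "TT \<subseteq> {B. B \<subseteq> T \<and> card B = D}"
  and cTT: "real (card TT) * real D ^ D \<le> p * (\<mu>S * real (card T)) ^ D"
  and IS: "I \<subseteq> SS"
  shows "real (card {f \<in> inj_funs S T. \<forall>A\<in>I. f ` A \<in> TT}) \<le> p ^ card I * real (card (inj_funs S T))"
proof -
  define n where "n = card T"
  define s where "s = card S"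
  define m where "m = card I"
  define U where "U = \<Union>I"
  define Q where "Q = (\<lambda>g::'a \<Rightarrow> 'a. \<forall>A\<in>I. g ` A \<in> TT)"
  have fSS: "finite SS" by (rule finite_subset[OF _ finite_Collect_subsets[OF fS]]) (use SSsub in auto)
  have fI: "finite I" using IS fSS by (rule finite_subset)
  have Iprops: "\<forall>A\<in>I. finite A \<and> card A = D" using IS SSsub fS by (auto intro: finite_subset[of _ S])
  have Idisj: "\<forall>A\<in>I. \<forall>B\<in>I. A \<noteq> B \<longrightarrow> A \<inter> B = {}" using IS disj by blast
  have US: "U \<subseteq> S" using IS SSsub by (auto simp: U_def)
  have fU: "finite U" using US fS by (rule finite_subset)
  have cU: "card U = D * m"
  proof -
    have "disjoint I" using Idisj by (auto simp: pairwise_def disjnt_def)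
    then have "card U = sum card I" unfolding U_def using Iprops by (intro card_Union_disjoint) auto
    also have "\<dots> = sum (\<lambda>_. D) I" using Iprops by (intro sum.cong) auto
    finally show ?thesis by (simp add: m_def)
  qed
  have mk: "m \<le> card SS" unfolding m_def using IS fSS by (rule card_mono[rotated])
  have us: "card U \<le> s" unfolding s_def using US fS by (rule card_mono[rotated])
  have un: "card U \<le> n" using us ST by (simp add: s_def n_def)
  have E_eq: "{f \<in> inj_funs S T. \<forall>A\<in>I. f ` A \<in> TT} = {f \<in> inj_funs S T. Q (restrict f U)}"
  proof -
    have "restrict f U ` A = f ` A" if "A \<in> I" for f :: "'a \<Rightarrow> 'a" and A
      using that by (auto simp: restrict_def U_def)
    then show ?thesis by (auto simp: Q_def)
  qed
  define F where "F = ff (n - card U) (s - card U)"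
  define G where "G = {g \<in> U \<rightarrow>\<^sub>E T. \<forall>A\<in>I. g ` A \<in> TT}"
  have fG: "finite G" unfolding G_def by (rule finite_subset[OF _ finite_PiE[of U "\<lambda>_. T"]]) (use fU fT in auto)
  have c1: "card {f \<in> inj_funs S T. Q (restrict f U)} \<le> card {g \<in> inj_funs U T. Q g} * F"
    unfolding F_def n_def s_def by (rule count_restrict[OF fS fT US])
  have c2: "card {g \<in> inj_funs U T. Q g} \<le> card G"
    by (rule card_mono[OF fG]) (auto simp: G_def Q_def inj_funs_def)
  have c3: "card G \<le> (card TT * D ^ D) ^ m"
    unfolding G_def U_def m_def by (rule count_G[OF fI Iprops Idisj fT TT])
  have "real (card G) \<le> real ((card TT * D ^ D) ^ m)" using c3 by (simp only: of_nat_le_iff)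
  also have "\<dots> = (real (card TT) * real D ^ D) ^ m" by simp
  also have "\<dots> \<le> (p * (\<mu>S * real n) ^ D) ^ m"
    by (rule power_mono) (use cTT in \<open>auto simp: n_def\<close>)
  also have "\<dots> = p ^ m * (\<mu>S * real n) ^ card U" by (simp only: cU power_mult_distrib power_mult)
  also have "\<dots> \<le> p ^ m * (real n - real (card U)) ^ card U"
  proof (rule mult_left_mono[OF power_mono])
    have "real (card U) = real D * real m" using cU by simp
    also have "\<dots> \<le> real D * real (card SS)" using mk by (intro mult_left_mono) auto
    finally have "real (card U) \<le> real D * real (card SS)" .
    moreover have "(1 - \<mu>S) * real n = real n - \<mu>S * real n" by (simp add: algebra_simps)
    ultimately show "\<mu>S * real n \<le> real n - real (card U)" using Dk unfolding n_def by linarith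
    show "0 \<le> \<mu>S * real n" using mS by simp
    show "0 \<le> p ^ m" using p0 by simp
  qed
  also have "\<dots> = p ^ m * real ((n - card U) ^ card U)" using un by (simp add: of_nat_diff)
  also have "\<dots> \<le> p ^ m * real (ff n (card U))"
  proof (rule mult_left_mono)
    show "real ((n - card U) ^ card U) \<le> real (ff n (card U))" by (simp only: of_nat_le_iff ff_lower)
    show "0 \<le> p ^ m" using p0 by simp
  qed
  finally have cG: "real (card G) \<le> p ^ m * real (ff n (card U))" .
  have cO: "card (inj_funs S T) = ff n (card U) * F"
  proof -
    have e: "card U + (s - card U) = s" using us by simp
    have "card (inj_funs S T) = ff n s"
      using card_inj_funs[OF fS fT] by (simp only: n_def s_def)
    also have "\<dots> = ff n (card U + (s - card U))" by (simp only: e)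
    also have "\<dots> = ff n (card U) * F" unfolding F_def by (rule ff_split)
    finally show ?thesis .
  qed
  have "real (card {f \<in> inj_funs S T. \<forall>A\<in>I. f ` A \<in> TT}) \<le> real (card G) * real F"
  proof -
    have "card {f \<in> inj_funs S T. \<forall>A\<in>I. f ` A \<in> TT} \<le> card {g \<in> inj_funs U T. Q g} * F"
      unfolding E_eq by (rule c1)
    also have "\<dots> \<le> card G * F" by (rule mult_le_mono1[OF c2])
    finally show ?thesis by (simp only: of_nat_mult[symmetric] of_nat_le_iff)
  qed
  also have "\<dots> \<le> p ^ m * real (ff n (card U)) * real F" using cG by (rule mult_right_mono) (rule of_nat_0_le_iff)
  also have "\<dots> = p ^ m * real (card (inj_funs S T))" by (simp only: cO of_nat_mult mult.assoc)
  finally show ?thesis by (simp add: m_def)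
qed


lemma main_bound:
  fixes D :: nat and \<beta> \<mu>S p :: real and S T :: "'a set" and SS TT :: "'a set set"
  assumes D: "D > 0" and b: "0 < \<beta>" and mS: "\<mu>S > 0" and p0: "0 < p" and p1: "p \<le> 1"
  and pb: "p powr \<beta> = \<beta> / 2"
  and fS: "finite S" and fT: "finite T" and ST: "card S \<le> card T"
  and SSsub: "SS \<subseteq> {A. A \<subseteq> S \<and> card A = D}"
  and disj: "\<forall>A\<in>SS. \<forall>B\<in>SS. A \<noteq> B \<longrightarrow> A \<inter> B = {}"
  and cSS: "real (card SS) \<le> (1 / real D) * (1 - \<mu>S) * real (card T)"
  and TT: "TT \<subseteq> {B. B \<subseteq> T \<and> card B = D}"
  and cTT: "real (card TT) \<le> (p * \<mu>S ^ D / real D ^ D) * real (card T) ^ D"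
  shows "measure_pmf.prob (pmf_of_set (inj_funs S T))
        {f. real (card ((\<lambda>A. f ` A) ` SS - TT)) > (1 - \<beta>) * real (card SS)}
        \<ge> 1 - \<beta> ^ card SS"
proof (cases "card SS = 0")
  case True then show ?thesis by simp
next
  case False
  define k where "k = card SS"
  define \<Omega> where "\<Omega> = inj_funs S T"
  define Good where "Good = {f. real (card ((\<lambda>A. f ` A) ` SS - TT)) > (1 - \<beta>) * real (card SS)}"
  define Bad where "Bad = {f \<in> \<Omega>. f \<notin> Good}"
  define E where "E = (\<lambda>I. {f \<in> inj_funs S T. \<forall>A\<in>I. f ` A \<in> TT})"
  define \<I> where "\<I> = {I. I \<subseteq> SS \<and> \<beta> * real k \<le> real (card I)}"
  have fSS: "finite SS" by (rule finite_subset[OF _ finite_Collect_subsets[OF fS]]) (use SSsub in auto)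
  have Dpos: "real D > 0" using D by simp
  have Dk: "real D * real (card SS) \<le> (1 - \<mu>S) * real (card T)"
  proof -
    have "real D * real (card SS) \<le> real D * ((1 / real D) * (1 - \<mu>S) * real (card T))"
      using cSS Dpos by (intro mult_left_mono) auto
    also have "\<dots> = (1 - \<mu>S) * real (card T)" using Dpos by simp
    finally show ?thesis .
  qed
  have cTT': "real (card TT) * real D ^ D \<le> p * (\<mu>S * real (card T)) ^ D"
  proof -
    have "real (card TT) * real D ^ D \<le> (p * \<mu>S ^ D / real D ^ D) * real (card T) ^ D * real D ^ D"
      using cTT by (rule mult_right_mono) simp
    also have "\<dots> = p * (\<mu>S * real (card T)) ^ D" using Dpos by (simp add: power_mult_distrib)
    finally show ?thesis .
  qed
  have fO: "finite \<Omega>" unfolding \<Omega>_def using fS fT by (rule finite_inj_funs)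
  have cOpos: "card \<Omega> > 0" unfolding \<Omega>_def using card_inj_funs[OF fS fT] ff_pos[OF ST] by simp
  have One: "\<Omega> \<noteq> {}" using cOpos by auto
  have EI: "real (card (E I)) \<le> p powr (\<beta> * real k) * real (card \<Omega>)" if "I \<in> \<I>" for I
  proof -
    have I: "I \<subseteq> SS" "\<beta> * real k \<le> real (card I)" using that by (auto simp: \<I>_def)
    have "real (card (E I)) \<le> p ^ card I * real (card \<Omega>)"
      unfolding E_def \<Omega>_def by (rule event_bound[OF D mS p0 fS fT ST SSsub disj Dk TT cTT' I(1)])
    also have "p ^ card I = p powr real (card I)" using p0 by (simp add: powr_realpow)
    also have "\<dots> \<le> p powr (\<beta> * real k)" using I(2) p0 p1 by (intro powr_mono') auto
    finally show ?thesis by (simp add: mult_right_mono)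
  qed
  have BadSub: "Bad \<subseteq> (\<Union>I\<in>\<I>. E I)"
  proof
    fix f assume "f \<in> Bad"
    then have fO: "f \<in> \<Omega>" and fG: "f \<notin> Good" by (auto simp: Bad_def)
    have finj: "inj_on f S" using fO by (auto simp: \<Omega>_def inj_funs_def)
    define J where "J = {A \<in> SS. f ` A \<in> TT}"
    have JS: "J \<subseteq> SS" by (auto simp: J_def)
    have fJ: "finite J" using JS fSS by (rule finite_subset)
    have eq: "(\<lambda>A. f ` A) ` SS - TT = (\<lambda>A. f ` A) ` (SS - J)" by (auto simp: J_def)
    have inj: "inj_on (\<lambda>A. f ` A) (SS - J)"
    proof (rule inj_onI, rule ccontr)
      fix A B assume A: "A \<in> SS - J" and B: "B \<in> SS - J" and e: "f ` A = f ` B" and ne: "A \<noteq> B"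
      have "card A = D" "A \<subseteq> S" "B \<subseteq> S" using A B SSsub by auto
      then have "A \<noteq> {}" using D by auto
      then obtain x where x: "x \<in> A" by auto
      then have "f x \<in> f ` B" using e by auto
      then obtain y where y: "y \<in> B" "f x = f y" by auto
      have "x = y" using inj_onD[OF finj y(2)] x y(1) \<open>A \<subseteq> S\<close> \<open>B \<subseteq> S\<close> by auto
      then show False using disj A B ne x y(1) by auto
    qed
    have "card ((\<lambda>A. f ` A) ` SS - TT) = card (SS - J)" unfolding eq using inj by (rule card_image)
    also have "\<dots> = k - card J" using JS fSS by (simp add: card_Diff_subset finite_subset k_def)
    finally have c: "card ((\<lambda>A. f ` A) ` SS - TT) = k - card J" .
    have "card J \<le> k" unfolding k_def using JS fSS by (rule card_mono[rotated])
    then have "real (k - card J) \<le> (1 - \<beta>) * real k" using fG c by (simp add: Good_def k_def not_less)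
    then have "\<beta> * real k \<le> real (card J)" using \<open>card J \<le> k\<close> by (simp add: of_nat_diff algebra_simps)
    then have "J \<in> \<I>" using JS by (simp add: \<I>_def)
    moreover have "f \<in> E J" using fO by (auto simp: E_def J_def \<Omega>_def)
    ultimately show "f \<in> (\<Union>I\<in>\<I>. E I)" by blast
  qed
  have fI: "finite \<I>" by (rule finite_subset[of _ "Pow SS"]) (use fSS in \<open>auto simp: \<I>_def\<close>)
  have cI: "card \<I> \<le> 2 ^ k"
  proof -
    have "card \<I> \<le> card (Pow SS)" by (rule card_mono) (use fSS in \<open>auto simp: \<I>_def\<close>)
    then show ?thesis using fSS by (simp add: card_Pow k_def)
  qed
  have fE: "finite (E I)" for I unfolding E_def using finite_inj_funs[OF fS fT] by simp
  have u1: "card Bad \<le> card (\<Union>I\<in>\<I>. E I)"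
    by (rule card_mono[OF _ BadSub]) (use fI fE in auto)
  have u2: "card (\<Union>I\<in>\<I>. E I) \<le> (\<Sum>I\<in>\<I>. card (E I))" by (rule card_UN_le[OF fI])
  have cI': "real (card \<I>) \<le> 2 ^ k"
  proof -
    have "real (card \<I>) \<le> real (2 ^ k)" by (simp only: of_nat_le_iff cI)
    then show ?thesis by simp
  qed
  have pk: "p powr (\<beta> * real k) = (\<beta> / 2) ^ k"
  proof -
    have "p powr (\<beta> * real k) = (p powr \<beta>) powr real k" by (simp only: powr_powr)
    also have "\<dots> = (\<beta> / 2) powr real k" by (simp only: pb)
    also have "\<dots> = (\<beta> / 2) ^ k" using b by (intro powr_realpow) simp
    finally show ?thesis .
  qed
  have nn: "0 \<le> p powr (\<beta> * real k) * real (card \<Omega>)" by simp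
  have "real (card Bad) \<le> real (\<Sum>I\<in>\<I>. card (E I))"
    using u1 u2 by (simp only: of_nat_le_iff) 
  also have "\<dots> = (\<Sum>I\<in>\<I>. real (card (E I)))" by (simp only: of_nat_sum)
  also have "\<dots> \<le> real (card \<I>) * (p powr (\<beta> * real k) * real (card \<Omega>))"
    by (rule sum_bounded_above) (rule EI)
  also have "\<dots> \<le> 2 ^ k * (p powr (\<beta> * real k) * real (card \<Omega>))"
    using cI' nn by (rule mult_right_mono)
  also have "\<dots> = (2 * (\<beta> / 2)) ^ k * real (card \<Omega>)"
    by (simp only: pk power_mult_distrib mult.assoc)
  also have "\<dots> = \<beta> ^ k * real (card \<Omega>)" by simp
  finally have cB: "real (card Bad) \<le> \<beta> ^ k * real (card \<Omega>)" .
  have i: "\<Omega> \<inter> Good = \<Omega> - Bad" by (auto simp: Bad_def)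
  have fB: "finite Bad" using fO by (auto simp: Bad_def)
  have d: "card (\<Omega> - Bad) = card \<Omega> - card Bad"
    by (rule card_Diff_subset[OF fB]) (auto simp: Bad_def)
  have le: "card Bad \<le> card \<Omega>" by (rule card_mono[OF fO]) (auto simp: Bad_def)
  have m: "measure_pmf.prob (pmf_of_set \<Omega>) Good = real (card (\<Omega> - Bad)) / real (card \<Omega>)"
    using measure_pmf_of_set[OF One fO, of Good] by (simp only: i)
  also have "real (card (\<Omega> - Bad)) = real (card \<Omega>) - real (card Bad)"
    using le by (simp only: d of_nat_diff)
  finally have m2: "measure_pmf.prob (pmf_of_set \<Omega>) Good = (real (card \<Omega>) - real (card Bad)) / real (card \<Omega>)" .
  have cOr: "real (card \<Omega>) > 0" using cOpos by simp
  have "(real (card \<Omega>) - real (card Bad)) / real (card \<Omega>) = 1 - real (card Bad) / real (card \<Omega>)"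
    using cOr by (simp add: diff_divide_distrib)
  moreover have "real (card Bad) / real (card \<Omega>) \<le> \<beta> ^ k"
    using cB cOr by (simp add: divide_le_eq)
  ultimately have "1 - \<beta> ^ k \<le> measure_pmf.prob (pmf_of_set \<Omega>) Good" using m2 by linarith
  then show ?thesis by (simp only: \<Omega>_def Good_def k_def)
qed


lemma triv_bound: "1 \<le> b \<Longrightarrow> 1 - b \<le> measure_pmf.prob P X"
  using measure_nonneg[of "measure_pmf P" X] by linarith

theorem lemma11p9:
  fixes \<Delta> :: nat and \<beta> \<mu>S :: real
  assumes "\<Delta> > 0" and "\<beta> > 0" and "\<mu>S > 0"
  shows "\<exists>\<mu>T::real. \<mu>T > 0 \<and>
    (\<forall>(S::'a set) T (SS::'a set set) (TT::'a set set).
      finite S \<longrightarrow> finite T \<longrightarrow> card S \<le> card T \<longrightarrow> S \<inter> T = {} \<longrightarrow>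
      SS \<subseteq> {A. A \<subseteq> S \<and> card A = \<Delta>} \<longrightarrow>
      (\<forall>A\<in>SS. \<forall>B\<in>SS. A \<noteq> B \<longrightarrow> A \<inter> B = {}) \<longrightarrow>
      real (card SS) \<le> (1 / real \<Delta>) * (1 - \<mu>S) * real (card T) \<longrightarrow>
      TT \<subseteq> {B. B \<subseteq> T \<and> card B = \<Delta>} \<longrightarrow>
      real (card TT) \<le> \<mu>T * real (card T) ^ \<Delta> \<longrightarrow>
      measure_pmf.prob (pmf_of_set (inj_funs S T))
        {f. real (card ((\<lambda>A. f ` A) ` SS - TT)) > (1 - \<beta>) * real (card SS)}
        \<ge> 1 - \<beta> ^ card SS)"
proof (cases "\<beta> < 1")
  case False
  then have "1 \<le> \<beta> ^ m" for m by (simp add: one_le_power)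
  then show ?thesis by (intro exI[of _ 1] conjI allI impI triv_bound) auto
next
  case True
  define p where "p = (\<beta> / 2) powr (1 / \<beta>)"
  have b2: "0 < \<beta> / 2" "\<beta> / 2 \<le> 1" using assms(2) True by auto
  have p0: "0 < p" using b2 by (simp add: p_def)
  have p1: "p \<le> 1"
  proof -
    have "p \<le> (\<beta> / 2) powr 0" unfolding p_def using b2 assms(2) by (intro powr_mono') auto
    then show ?thesis using b2 by simp
  qed
  have pb: "p powr \<beta> = \<beta> / 2"
    using assms(2) b2 by (simp add: p_def powr_powr)
  define \<mu>T where "\<mu>T = p * \<mu>S ^ \<Delta> / real \<Delta> ^ \<Delta>"
  have mT: "\<mu>T > 0" using p0 assms by (simp add: \<mu>T_def)
  show ?thesis
  proof (intro exI[of _ \<mu>T] conjI allI impI)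
    show "\<mu>T > 0" by (rule mT)
  next
    fix S T :: "'a set" and SS TT :: "'a set set"
    assume h: "finite S" "finite T" "card S \<le> card T" "S \<inter> T = {}"
      "SS \<subseteq> {A. A \<subseteq> S \<and> card A = \<Delta>}" "\<forall>A\<in>SS. \<forall>B\<in>SS. A \<noteq> B \<longrightarrow> A \<inter> B = {}"
      "real (card SS) \<le> (1 / real \<Delta>) * (1 - \<mu>S) * real (card T)"
      "TT \<subseteq> {B. B \<subseteq> T \<and> card B = \<Delta>}" "real (card TT) \<le> \<mu>T * real (card T) ^ \<Delta>"
    show "measure_pmf.prob (pmf_of_set (inj_funs S T))
        {f. real (card ((\<lambda>A. f ` A) ` SS - TT)) > (1 - \<beta>) * real (card SS)}
        \<ge> 1 - \<beta> ^ card SS"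
      by (rule main_bound[OF assms(1,2,3) p0 p1 pb h(1,2,3,5,6,7,8) h(9)[unfolded \<mu>T_def]])
  qed
qed
end
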